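(* Let $A \in \mathbb{C}^{n \times n}$, and fix $A^-\in A\{1\}$ and $A^{GD}\in A\{GD\}$. For $X\in\mathbb{C}^{n\times n}$ the following are equivalent: (i) $X = A^{GD}AA^{-}$; (ii) $XA=A^{GD}A$ and $N(X)=N(AA^{-})$; (iii) $XAA^{GD}=A^{GD}AA^{GD}$ and $N(X)=N(AA^{-})$.
   Context: For $A\in\mathbb{C}^{n\times n}$, $ind(A)$ is the smallest nonnegative integer $k$ with $\mathrm{rank}(A^k)=\mathrm{rank}(A^{k+1})$. $A\{1\}$ is the set of matrices $X$ with $AXA=A$. With $k=ind(A)$, $A\{GD\}$ is the set of G-Drazin inverses of $A$: matrices $X$ with $AXA=A$, $XA^{k+1}=A^k$, $A^{k+1}X=A^k$. $N(\cdot)$ denotes null space. The matrix $A^{GD}AA^-$ is called the GD1 inverse of $A$ associated with $A^-$ and $A^{GD}$. *)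

theory Defs
  imports "HOL-Analysis.Analysis"
begin

text \<open>Square complex matrices are modelled as complex^'n^'n, with n = CARD('n).\<close>

primrec mpow :: "'a::field^'n^'n \<Rightarrow> nat \<Rightarrow> 'a^'n^'n" where
  "mpow A 0 = mat 1"
| "mpow A (Suc k) = A ** mpow A k"

definition ind :: "'a::field^'n^'n \<Rightarrow> nat" where
  "ind A = (LEAST k. rank (mpow A k) = rank (mpow A (Suc k)))"

definition inner_inverses :: "'a::field^'n^'n \<Rightarrow> ('a^'n^'n) set" where
  "inner_inverses A = {X. A ** X ** A = A}"

definition GD_inverses :: "'a::field^'n^'n \<Rightarrow> ('a^'n^'n) set" where
  "GD_inverses A = {X. A ** X ** A = A
                      \<and> X ** mpow A (Suc (ind A)) = mpow A (ind A)
                      \<and> mpow A (Suc (ind A)) ** X = mpow A (ind A)}"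

definition null_space :: "'a::field^'n^'m \<Rightarrow> ('a^'n) set" where
  "null_space M = {x. M *v x = 0}"

end

theory Submission
  imports Defs
begin

lemma right_absorb:
  fixes X P :: "'a::field^'n^'n"
  assumes idem: "P ** P = P" and sub: "null_space P \<subseteq> null_space X"
  shows "X ** P = X"
proof -
  have "X *v v = (X ** P) *v v" for v
  proof -
    have "P *v (v - P *v v) = 0"
      by (simp add: matrix_vector_mult_diff_distrib matrix_vector_mul_assoc idem)
    hence "X *v (v - P *v v) = 0" using sub by (auto simp: null_space_def)
    thus ?thesis by (simp add: matrix_vector_mult_diff_distrib matrix_vector_mul_assoc)
  qed
  thus ?thesis by (simp add: matrix_eq)
qed

theorem theorem2p6:
  fixes A Am AGD X :: "complex^'n^'n"
  assumes "Am \<in> inner_inverses A"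
    and "AGD \<in> GD_inverses A"
  shows "(X = AGD ** A ** Am
          \<longleftrightarrow> (X ** A = AGD ** A \<and> null_space X = null_space (A ** Am)))
       \<and> (X = AGD ** A ** Am
          \<longleftrightarrow> (X ** A ** AGD = AGD ** A ** AGD \<and> null_space X = null_space (A ** Am)))"
proof -
  have h1: "A ** Am ** A = A" using assms(1) by (simp add: inner_inverses_def)
  have h2: "A ** AGD ** A = A" using assms(2) by (simp add: GD_inverses_def)
  have idem: "(A ** Am) ** (A ** Am) = A ** Am"
    by (metis h1 matrix_mul_assoc)
  have N: "null_space (AGD ** A ** Am) = null_space (A ** Am)"
  proof
    show "null_space (AGD ** A ** Am) \<subseteq> null_space (A ** Am)"
    proof
      fix x assume "x \<in> null_space (AGD ** A ** Am)"
      hence "(AGD ** A ** Am) *v x = 0" by (simp add: null_space_def)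
      hence "A *v ((AGD ** A ** Am) *v x) = 0" by simp
      hence "(A ** AGD ** A ** Am) *v x = 0" by (simp add: matrix_vector_mul_assoc matrix_mul_assoc)
      thus "x \<in> null_space (A ** Am)" using h2 by (simp add: null_space_def)
    qed
  next
    show "null_space (A ** Am) \<subseteq> null_space (AGD ** A ** Am)"
    proof
      fix x assume "x \<in> null_space (A ** Am)"
      hence "(A ** Am) *v x = 0" by (simp add: null_space_def)
      hence "AGD *v ((A ** Am) *v x) = 0" by simp
      thus "x \<in> null_space (AGD ** A ** Am)"
        by (simp add: null_space_def matrix_vector_mul_assoc matrix_mul_assoc)
    qed
  qed
  have i1: "AGD ** A ** Am ** A = AGD ** A" by (metis h1 matrix_mul_assoc)
  have key: "X = AGD ** A ** Am" if "X ** A = AGD ** A" "null_space X = null_space (A ** Am)"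
  proof -
    have "X ** (A ** Am) = X" using right_absorb[OF idem] that(2) by simp
    thus ?thesis using that(1) by (metis matrix_mul_assoc)
  qed
  have r3: "X ** A = AGD ** A" if "X ** A ** AGD = AGD ** A ** AGD"
  proof -
    have "X ** A = X ** (A ** AGD ** A)" using h2 by simp
    also have "\<dots> = (X ** A ** AGD) ** A" by (simp add: matrix_mul_assoc)
    also have "\<dots> = AGD ** (A ** AGD ** A)" using that by (simp add: matrix_mul_assoc)
    finally show ?thesis using h2 by simp
  qed
  show ?thesis
    using key r3 N i1 by (metis matrix_mul_assoc)
qed

end
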